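(* Let $0<a_1<a_2<\cdots<a_n$ be task lengths and $A_{i:n}:=a_i+\cdots+a_n$. Let the disruption intensity be $\lambda(t)=\bar\lambda f(t)$ with $\bar\lambda>0$ and $f$ a positive differentiable function on $[0,\infty)$ with $f_-:=\inf_{t\ge0}f(t)>0$ and $f_+:=\sup_{t\ge0}f(t)<\infty$. Assume $\bar\lambda\le\frac{1}{2f_+a_n}$. Then for every $t\ge0$ and $i=1,\dots,n$, $$A_{i:n}\le M_{i:n}(t)\le A_{i:n}+\bar\lambda f_+(a_i^2+\cdots+a_n^2).$$ In particular, $M_{i:n}(t)\le\frac32A_{i:n}$.
   Context: Model: a single machine processes a finite batch of tasks one at a time in a fixed order. A task of length $c>0$ requires $c$ units of uninterrupted processing. Disruptions occur at the points of a non-homogeneous Poisson process on $[0,\infty)$ with intensity function $\lambda(t)$. If a disruption occurs while a task is being processed, all work on it is lost and that task is restarted from scratch at the disruption time (no repair time); a task is completed once it has been processed for $c$ consecutive time units with no disruption, and the machine then immediately starts the next task. $M_{i:n}(t)$ denotes the expected time, measured from $t$, to complete the tasks $a_i,a_{i+1},\dots,a_n$ in this order when processing of $a_i$ starts at time $t$. *)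

theory Defs
  imports "HOL-Analysis.Analysis"
begin

definition cum_int :: "(real \<Rightarrow> real) \<Rightarrow> real \<Rightarrow> real \<Rightarrow> real" where
  "cum_int lam t s = integral {t..s} lam"

text \<open>One-step (Bellman / first-event) operator of the Markov chain of
  (current task index, start time of current attempt).  From state (i,t) with
  c = a i: with probability exp(-Lambda(t,t+c)) no disruption occurs, the task
  completes at t+c and the chain moves to (i+1, t+c) at cost c; otherwise the
  first disruption occurs at s in (t,t+c) with density lam s * exp(-Lambda(t,s)),
  the task restarts, the chain moves to (i, s) at cost s - t.\<close>
definition restart_op ::
  "(real \<Rightarrow> real) \<Rightarrow> (nat \<Rightarrow> real) \<Rightarrow> nat \<Rightarrow>
   (nat \<Rightarrow> real \<Rightarrow> ennreal) \<Rightarrow> (nat \<Rightarrow> real \<Rightarrow> ennreal)" where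
  "restart_op lam a n F = (\<lambda>i t.
     if i \<le> n then
       ennreal (exp (- cum_int lam t (t + a i))) * (ennreal (a i) + F (Suc i) (t + a i))
       + (\<integral>\<^sup>+ s. indicator {t<..<t + a i} s
              * ennreal (lam s * exp (- cum_int lam t s))
              * (ennreal (s - t) + F i s) \<partial>lborel)
     else 0)"

text \<open>M lam a n i t: expected time, measured from t, to complete tasks
  a i, ..., a n in order when processing of a i starts at t.  Defined as the
  expected total (nonnegative) cost of the above chain, i.e. the least fixed
  point of the one-step operator.\<close>
definition exp_completion ::
  "(real \<Rightarrow> real) \<Rightarrow> (nat \<Rightarrow> real) \<Rightarrow> nat \<Rightarrow> nat \<Rightarrow> real \<Rightarrow> ennreal" where
  "exp_completion lam a n i t = lfp (restart_op lam a n) i t"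

end

theory Submission
  imports Defs
begin

lemma dens_int:
  fixes lam :: "real \<Rightarrow> real"
  assumes cont: "continuous_on {0..} lam" and t: "0 \<le> t" and c: "0 < c"
  shows "((\<lambda>s. lam s * exp (- cum_int lam t s)) has_integral (1 - exp (- cum_int lam t (t + c)))) {t..t+c}"
proof -
  have cc: "continuous_on {t..t+c} lam" using t by (intro continuous_on_subset[OF cont]) auto
  have "((\<lambda>x. lam x * exp (- integral {t..x} lam)) has_integral
          ((\<lambda>u. - exp (- integral {t..u} lam)) (t+c) - (\<lambda>u. - exp (- integral {t..u} lam)) t)) {t..t+c}"
  proof (rule fundamental_theorem_of_calculus)
    show "t \<le> t + c" using c by simp
  next
    fix x assume x: "x \<in> {t..t+c}"
    have d: "((\<lambda>u. integral {t..u} lam) has_real_derivative lam x) (at x within {t..t+c})"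
      using integral_has_vector_derivative[OF cc x] by (simp add: has_real_derivative_iff_has_vector_derivative)
    have "((\<lambda>u. - exp (- integral {t..u} lam)) has_real_derivative (lam x * exp (- integral {t..x} lam))) (at x within {t..t+c})"
      by (auto intro!: derivative_eq_intros d)
    then show "((\<lambda>u. - exp (- integral {t..u} lam)) has_vector_derivative (lam x * exp (- integral {t..x} lam))) (at x within {t..t+c})"
      by (simp add: has_real_derivative_iff_has_vector_derivative)
  qed
  then show ?thesis by (simp add: cum_int_def)
qed


lemma nn_of_has_integral:
  fixes h :: "real \<Rightarrow> real"
  assumes nn: "\<And>s. s \<in> {t<..<u} \<Longrightarrow> 0 \<le> h s" and hi: "(h has_integral I) {t..u}"
  shows "(\<integral>\<^sup>+ s. indicator {t<..<u} s * ennreal (h s) \<partial>lborel) = ennreal I"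
proof -
  have "(h has_integral I) {t<..<u}" using hi has_integral_open_interval[of h I t u] by (simp add: box_real)
  from nn_integral_has_integral_lebesgue'[OF nn this] show ?thesis by (simp add: mult.commute)
qed

lemma cum_bounds:
  fixes lam :: "real \<Rightarrow> real"
  assumes cont: "continuous_on {0..} lam" and nn: "\<And>s. 0 \<le> s \<Longrightarrow> 0 \<le> lam s"
    and le: "\<And>s. 0 \<le> s \<Longrightarrow> lam s \<le> L" and t: "0 \<le> t" and ts: "t \<le> s"
  shows "0 \<le> cum_int lam t s" "cum_int lam t s \<le> L * (s - t)"
proof -
  have cc: "continuous_on {t..s} lam" using t by (intro continuous_on_subset[OF cont]) auto
  then have int: "lam integrable_on {t..s}" by (rule integrable_continuous_interval)
  show "0 \<le> cum_int lam t s" unfolding cum_int_def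
    by (rule integral_nonneg[OF int]) (use nn t in auto)
  have "integral {t..s} lam \<le> integral {t..s} (\<lambda>_. L)"
    by (rule integral_le[OF int]) (use le t in auto)
  then show "cum_int lam t s \<le> L * (s - t)" using ts by (simp add: cum_int_def mult.commute)
qed

lemma dens_cont:
  fixes lam :: "real \<Rightarrow> real"
  assumes cont: "continuous_on {0..} lam" and t: "0 \<le> t"
  shows "continuous_on {t..u} (\<lambda>s. lam s * exp (- cum_int lam t s))"
proof -
  have cc: "continuous_on {t..u} lam" using t by (intro continuous_on_subset[OF cont]) auto
  have "continuous_on {t..u} (\<lambda>s. integral {t..s} lam)"
    by (rule indefinite_integral_continuous_1[OF integrable_continuous_interval[OF cc]])
  then show ?thesis unfolding cum_int_def
    by (intro continuous_intros cc)
qed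

lemma dens_bounds:
  fixes lam :: "real \<Rightarrow> real"
  assumes cont: "continuous_on {0..} lam" and nn: "\<And>s. 0 \<le> s \<Longrightarrow> 0 \<le> lam s"
    and le: "\<And>s. 0 \<le> s \<Longrightarrow> lam s \<le> L" and t: "0 \<le> t" and ts: "t \<le> s"
  shows "0 \<le> lam s * exp (- cum_int lam t s)" "lam s * exp (- cum_int lam t s) \<le> L"
proof -
  have "0 \<le> cum_int lam t s" using cum_bounds[OF cont nn le t ts] by simp
  then have e: "exp (- cum_int lam t s) \<le> 1" by simp
  have l: "0 \<le> lam s" "lam s \<le> L" using nn le t ts by auto
  show "0 \<le> lam s * exp (- cum_int lam t s)" using l by simp
  have "lam s * exp (- cum_int lam t s) \<le> lam s * 1" using l e by (intro mult_left_mono) auto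
  then show "lam s * exp (- cum_int lam t s) \<le> L" using l by simp
qed


lemma step_upper:
  fixes lam :: "real \<Rightarrow> real" and H :: "real \<Rightarrow> ennreal"
  assumes cont: "continuous_on {0..} lam" and nn: "\<And>s. 0 \<le> s \<Longrightarrow> 0 \<le> lam s"
    and le: "\<And>s. 0 \<le> s \<Longrightarrow> lam s \<le> L" and t: "0 \<le> t" and c: "0 < c"
    and L: "0 \<le> L" and small: "L * c \<le> 1/2" and K': "0 \<le> K'"
    and H: "\<And>s. 0 \<le> s \<Longrightarrow> H s = ennreal (c + L * c\<^sup>2 + K')"
  shows "ennreal (exp (- cum_int lam t (t + c))) * (ennreal c + ennreal K')
     + (\<integral>\<^sup>+ s. indicator {t<..<t + c} s * ennreal (lam s * exp (- cum_int lam t s))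
              * (ennreal (s - t) + H s) \<partial>lborel) \<le> ennreal (c + L * c\<^sup>2 + K')"
proof -
  define K where "K = c + L * c\<^sup>2 + K'"
  define p where "p = exp (- cum_int lam t (t + c))"
  define d where "d = (\<lambda>s. lam s * exp (- cum_int lam t s))"
  have K0: "0 \<le> K" unfolding K_def using c L K' by simp
  have dnn: "\<And>s. t \<le> s \<Longrightarrow> 0 \<le> d s" "\<And>s. t \<le> s \<Longrightarrow> d s \<le> L"
    unfolding d_def using dens_bounds[OF cont nn le t] by auto
  have dc: "continuous_on {t..t+c} d" unfolding d_def by (rule dens_cont[OF cont t])
  have dint: "(d has_integral (1 - p)) {t..t+c}" unfolding d_def p_def by (rule dens_int[OF cont t c])
  define I1 where "I1 = integral {t..t+c} (\<lambda>s. d s * (s - t))"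
  have c1: "continuous_on {t..t+c} (\<lambda>s. d s * (s - t))" by (intro continuous_intros dc)
  have i1: "((\<lambda>s. d s * (s - t)) has_integral I1) {t..t+c}"
    unfolding I1_def by (rule integrable_integral[OF integrable_continuous_interval[OF c1]])
  have lint: "((\<lambda>s. L * (s - t)) has_integral (L * c\<^sup>2 / 2)) {t..t+c}"
  proof -
    have "((\<lambda>s. L * (s - t)) has_integral ((\<lambda>s. L * (s - t)\<^sup>2 / 2) (t+c) - (\<lambda>s. L * (s - t)\<^sup>2 / 2) t)) {t..t+c}"
    proof (rule fundamental_theorem_of_calculus)
      show "t \<le> t + c" using c by simp
    next
      fix x assume x: "x \<in> {t..t+c}"
      have "((\<lambda>s. L * (s - t)\<^sup>2 / 2) has_real_derivative L * (x - t)) (at x within {t..t+c})"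
        by (auto intro!: derivative_eq_intros simp: power2_eq_square field_simps)
      then show "((\<lambda>s. L * (s - t)\<^sup>2 / 2) has_vector_derivative L * (x - t)) (at x within {t..t+c})"
        by (simp add: has_real_derivative_iff_has_vector_derivative)
    qed
    then show ?thesis by simp
  qed
  have I1le: "I1 \<le> L * c\<^sup>2 / 2"
    by (rule has_integral_le[OF i1 lint]) (use dnn in \<open>auto intro!: mult_right_mono\<close>)
  have tot: "((\<lambda>s. d s * (s - t) + K * d s) has_integral (I1 + K * (1 - p))) {t..t+c}"
    by (intro has_integral_add i1 has_integral_mult_right dint)
  have eq: "(\<integral>\<^sup>+ s. indicator {t<..<t + c} s * ennreal (d s) * (ennreal (s - t) + H s) \<partial>lborel)
      = (\<integral>\<^sup>+ s. indicator {t<..<t + c} s * ennreal (d s * (s - t) + K * d s) \<partial>lborel)"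
  proof (rule nn_integral_cong)
    fix s
    show "indicator {t<..<t + c} s * ennreal (d s) * (ennreal (s - t) + H s)
      = indicator {t<..<t + c} s * ennreal (d s * (s - t) + K * d s)"
    proof (cases "s \<in> {t<..<t+c}")
      case True
      then have s: "t \<le> s" "0 \<le> s" using t by auto
      have "ennreal (d s) * (ennreal (s - t) + H s) = ennreal (d s) * ennreal (s - t + K)"
        using H[OF s(2)] s K0 by (simp add: K_def ennreal_plus)
      also have "\<dots> = ennreal (d s * (s - t + K))" using s K0 dnn(1)[OF s(1)] by (simp add: ennreal_mult)
      finally show ?thesis using True by (simp add: algebra_simps)
    qed simp
  qed
  have nnv: "(\<integral>\<^sup>+ s. indicator {t<..<t + c} s * ennreal (d s * (s - t) + K * d s) \<partial>lborel) = ennreal (I1 + K * (1 - p))"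
    by (rule nn_of_has_integral[OF _ tot]) (use dnn K0 in auto)
  have p0: "0 \<le> p" unfolding p_def by simp
  have cb: "cum_int lam t (t + c) \<le> L * c" using cum_bounds(2)[OF cont nn le t, of "t+c"] c by simp
  have "1 - L * c \<le> exp (- (L * c))" using exp_ge_add_one_self[of "-(L*c)"] by simp
  also have "\<dots> \<le> p" unfolding p_def using cb by simp
  finally have ph: "1/2 \<le> p" using small by simp
  have p1: "p \<le> 1" unfolding p_def using cum_bounds(1)[OF cont nn le t, of "t+c"] c by simp
  have I10: "0 \<le> I1" by (rule has_integral_nonneg[OF i1]) (use dnn in auto)
  have "ennreal p * (ennreal c + ennreal K') + ennreal (I1 + K * (1 - p))
      = ennreal (p * (c + K') + (I1 + K * (1 - p)))"
    using p0 p1 c K' I10 K0 by (simp add: ennreal_plus ennreal_mult)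
  also have "\<dots> \<le> ennreal K"
  proof (rule ennreal_leI)
    have "L * c\<^sup>2 / 2 \<le> p * (L * c\<^sup>2)" using mult_right_mono[OF ph, of "L * c\<^sup>2"] L by simp
    then show "p * (c + K') + (I1 + K * (1 - p)) \<le> K" using I1le unfolding K_def by (simp add: algebra_simps)
  qed
  finally show ?thesis using eq nnv unfolding K_def p_def d_def by simp
qed


lemma step_lower:
  fixes lam :: "real \<Rightarrow> real" and H :: "real \<Rightarrow> ennreal"
  assumes cont: "continuous_on {0..} lam" and nn: "\<And>s. 0 \<le> s \<Longrightarrow> 0 \<le> lam s"
    and le: "\<And>s. 0 \<le> s \<Longrightarrow> lam s \<le> L" and t: "0 \<le> t" and c: "0 < c"
    and r: "0 \<le> r" and A': "0 \<le> A'" and Fn: "ennreal A' \<le> Fn"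
    and H: "\<And>s. 0 \<le> s \<Longrightarrow> ennreal r \<le> H s"
  shows "ennreal (exp (- cum_int lam t (t + c)) * (c + A') + (1 - exp (- cum_int lam t (t + c))) * r)
    \<le> ennreal (exp (- cum_int lam t (t + c))) * (ennreal c + Fn)
     + (\<integral>\<^sup>+ s. indicator {t<..<t + c} s * ennreal (lam s * exp (- cum_int lam t s))
              * (ennreal (s - t) + H s) \<partial>lborel)"
proof -
  define p where "p = exp (- cum_int lam t (t + c))"
  define d where "d = (\<lambda>s. lam s * exp (- cum_int lam t s))"
  have dnn: "\<And>s. t \<le> s \<Longrightarrow> 0 \<le> d s"
    unfolding d_def using dens_bounds[OF cont nn le t] by auto
  have dint: "(d has_integral (1 - p)) {t..t+c}" unfolding d_def p_def by (rule dens_int[OF cont t c])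
  have tot: "((\<lambda>s. r * d s) has_integral (r * (1 - p))) {t..t+c}"
    by (intro has_integral_mult_right dint)
  have nnv: "(\<integral>\<^sup>+ s. indicator {t<..<t + c} s * ennreal (r * d s) \<partial>lborel) = ennreal (r * (1 - p))"
    by (rule nn_of_has_integral[OF _ tot]) (use dnn r in auto)
  have mono: "(\<integral>\<^sup>+ s. indicator {t<..<t + c} s * ennreal (r * d s) \<partial>lborel)
     \<le> (\<integral>\<^sup>+ s. indicator {t<..<t + c} s * ennreal (d s) * (ennreal (s - t) + H s) \<partial>lborel)"
  proof (rule nn_integral_mono)
    fix s
    show "indicator {t<..<t + c} s * ennreal (r * d s)
      \<le> indicator {t<..<t + c} s * ennreal (d s) * (ennreal (s - t) + H s)"
    proof (cases "s \<in> {t<..<t+c}")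
      case True
      then have s: "t \<le> s" "0 \<le> s" using t by auto
      have "ennreal (r * d s) = ennreal (d s) * ennreal r" using r dnn[OF s(1)] by (simp add: ennreal_mult mult.commute)
      also have "\<dots> \<le> ennreal (d s) * (ennreal (s - t) + H s)"
        by (intro mult_left_mono order.trans[OF H[OF s(2)]]) auto
      finally show ?thesis using True by (simp add: mult.assoc)
    qed simp
  qed
  have p0: "0 \<le> p" unfolding p_def by simp
  have p1: "p \<le> 1" unfolding p_def using cum_bounds(1)[OF cont nn le t, of "t+c"] c by simp
  have "ennreal (p * (c + A') + (1 - p) * r) = ennreal p * ennreal (c + A') + ennreal (r * (1 - p))"
    using p0 p1 c A' r by (simp add: ennreal_plus ennreal_mult mult.commute)
  also have "\<dots> \<le> ennreal p * (ennreal c + Fn) + ennreal (r * (1 - p))"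
    using Fn c A' by (intro add_mono mult_left_mono) (auto simp: ennreal_plus)
  also have "\<dots> \<le> ennreal p * (ennreal c + Fn) + (\<integral>\<^sup>+ s. indicator {t<..<t + c} s * ennreal (d s) * (ennreal (s - t) + H s) \<partial>lborel)"
    using mono nnv by (intro add_left_mono) simp
  finally show ?thesis unfolding p_def d_def .
qed


lemma upper_lfp:
  fixes lam :: "real \<Rightarrow> real"
  assumes cont: "continuous_on {0..} lam" and nn: "\<And>s. 0 \<le> s \<Longrightarrow> 0 \<le> lam s"
    and le: "\<And>s. 0 \<le> s \<Longrightarrow> lam s \<le> L" and L: "0 \<le> L"
    and apos: "\<And>j. 1 \<le> j \<Longrightarrow> j \<le> n \<Longrightarrow> 0 < a j"
    and small: "\<And>j. 1 \<le> j \<Longrightarrow> j \<le> n \<Longrightarrow> L * a j \<le> 1/2"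
    and i: "1 \<le> i" and t: "0 \<le> t"
  shows "exp_completion lam a n i t \<le> ennreal (\<Sum>j=i..n. a j + L * (a j)\<^sup>2)"
proof -
  define G where "G = (\<lambda>i (t::real). if 1 \<le> i \<and> 0 \<le> t then ennreal (\<Sum>j=i..n. a j + L * (a j)\<^sup>2) else top)"
  have "restart_op lam a n G \<le> G"
  proof (intro le_funI)
    fix i t
    show "restart_op lam a n G i t \<le> G i t"
    proof (cases "i \<le> n \<and> 1 \<le> i \<and> 0 \<le> t")
      case False
      then show ?thesis unfolding restart_op_def G_def by auto
    next
      case True
      then have i: "1 \<le> i" "i \<le> n" and t: "0 \<le> t" by auto
      define K' where "K' = (\<Sum>j=Suc i..n. a j + L * (a j)\<^sup>2)"
      have K'0: "0 \<le> K'" unfolding K'_def proof (intro sum_nonneg)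
        fix j assume "j \<in> {Suc i..n}"
        then have "0 < a j" using apos i by auto
        then show "0 \<le> a j + L * (a j)\<^sup>2" using L by simp
      qed
      have c: "0 < a i" using apos i by auto
      have sp: "(\<Sum>j=i..n. a j + L * (a j)\<^sup>2) = a i + L * (a i)\<^sup>2 + K'"
        unfolding K'_def using i by (simp add: sum.atLeast_Suc_atMost)
      have Gn: "G (Suc i) (t + a i) = ennreal K'" unfolding G_def K'_def using t c by simp
      have Hs: "\<And>s. 0 \<le> s \<Longrightarrow> G i s = ennreal (a i + L * (a i)\<^sup>2 + K')"
        unfolding G_def using i sp by simp
      have "restart_op lam a n G i t = ennreal (exp (- cum_int lam t (t + a i))) * (ennreal (a i) + ennreal K')
     + (\<integral>\<^sup>+ s. indicator {t<..<t + a i} s * ennreal (lam s * exp (- cum_int lam t s))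
              * (ennreal (s - t) + G i s) \<partial>lborel)"
        unfolding restart_op_def using i Gn by simp
      also have "\<dots> \<le> ennreal (a i + L * (a i)\<^sup>2 + K')"
        by (rule step_upper[OF cont nn le t c L small[OF i] K'0 Hs])
      also have "\<dots> = G i t" unfolding G_def using i t sp by simp
      finally show ?thesis .
    qed
  qed
  then have "exp_completion lam a n \<le> G" unfolding exp_completion_def fun_eq_iff
    by (rule lfp_lowerbound)
  then have "exp_completion lam a n i t \<le> G i t" by (auto dest!: le_funD)
  then show ?thesis using i t unfolding G_def by simp
qed


lemma lower_pre:
  fixes lam :: "real \<Rightarrow> real" and F :: "nat \<Rightarrow> real \<Rightarrow> ennreal"
  assumes cont: "continuous_on {0..} lam" and nn: "\<And>s. 0 \<le> s \<Longrightarrow> 0 \<le> lam s"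
    and le: "\<And>s. 0 \<le> s \<Longrightarrow> lam s \<le> L"
    and apos: "\<And>j. 1 \<le> j \<Longrightarrow> j \<le> n \<Longrightarrow> 0 < a j"
    and pre: "restart_op lam a n F \<le> F"
  shows "\<forall>i. Suc n - i = k \<longrightarrow> 1 \<le> i \<longrightarrow> i \<le> Suc n \<longrightarrow> (\<forall>t\<ge>0. ennreal (\<Sum>j=i..n. a j) \<le> F i t)"
proof (induction k)
  case 0
  then show ?case by auto
next
  case (Suc k)
  show ?case
  proof (intro allI impI)
    fix i assume k: "Suc n - i = Suc k" and i1: "1 \<le> i" and "i \<le> Suc n"
    then have i: "1 \<le> i" "i \<le> n" by auto
    fix t0 :: real assume t0: "0 \<le> t0"
    have IH: "\<And>t. 0 \<le> t \<Longrightarrow> ennreal (\<Sum>j=Suc i..n. a j) \<le> F (Suc i) t"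
      using Suc.IH k i by auto
    define A' where "A' = (\<Sum>j=Suc i..n. a j)"
    define c where "c = a i"
    define A where "A = c + A'"
    have A'0: "0 \<le> A'" unfolding A'_def
    proof (intro sum_nonneg)
      fix j assume "j \<in> {Suc i..n}"
      then show "0 \<le> a j" using apos i by (auto intro: less_imp_le)
    qed
    have c: "0 < c" unfolding c_def using apos i by auto
    have sp: "(\<Sum>j=i..n. a j) = A" unfolding A_def A'_def c_def using i by (simp add: sum.atLeast_Suc_atMost)
    define m where "m = (INF s\<in>{0..}. F i s)"
    have mle: "\<And>s. 0 \<le> s \<Longrightarrow> m \<le> F i s" unfolding m_def by (rule INF_lower) simp
    have "ennreal A \<le> m"
    proof (rule ccontr)
      assume "\<not> ennreal A \<le> m"
      then have mA: "m < ennreal A" by simp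
      then have "m \<noteq> top" by auto
      then obtain r where r: "0 \<le> r" "m = ennreal r" by (cases m) auto
      have rA: "r < A" using mA r by (simp add: ennreal_less_iff)
      define \<delta> where "\<delta> = exp (- (L * c))"
      have d0: "0 < \<delta>" unfolding \<delta>_def by simp
      have bound: "ennreal (r + \<delta> * (A - r)) \<le> F i t" if t: "0 \<le> t" for t
      proof -
        define p where "p = exp (- cum_int lam t (t + c))"
        have p1: "p \<le> 1" unfolding p_def using cum_bounds(1)[OF cont nn le t, of "t+c"] c by simp
        have cb: "cum_int lam t (t + c) \<le> L * c" using cum_bounds(2)[OF cont nn le t, of "t+c"] c by simp
        have dp: "\<delta> \<le> p" unfolding p_def \<delta>_def using cb by simp
        have "r + \<delta> * (A - r) \<le> r + p * (A - r)" using dp rA by (intro add_left_mono mult_right_mono) auto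
        also have "\<dots> = p * (c + A') + (1 - p) * r" unfolding A_def by (simp add: algebra_simps)
        finally have "ennreal (r + \<delta> * (A - r)) \<le> ennreal (p * (c + A') + (1 - p) * r)"
          by (rule ennreal_leI)
        also have "\<dots> \<le> ennreal p * (ennreal c + F (Suc i) (t + c))
             + (\<integral>\<^sup>+ s. indicator {t<..<t + c} s * ennreal (lam s * exp (- cum_int lam t s))
              * (ennreal (s - t) + F i s) \<partial>lborel)"
          unfolding p_def
        proof (rule step_lower[OF cont nn le t c r(1) A'0])
          show "ennreal A' \<le> F (Suc i) (t + c)" unfolding A'_def using IH t c by simp
          show "\<And>s. 0 \<le> s \<Longrightarrow> ennreal r \<le> F i s" using mle r by simp
        qed
        also have "\<dots> = restart_op lam a n F i t" unfolding restart_op_def c_def p_def using i by simp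
        also have "\<dots> \<le> F i t" using pre by (auto dest!: le_funD)
        finally show ?thesis .
      qed
      have "ennreal (r + \<delta> * (A - r)) \<le> m" unfolding m_def
        by (rule INF_greatest) (use bound in auto)
      then have "r + \<delta> * (A - r) \<le> r" using r by simp
      moreover have "0 < \<delta> * (A - r)" using d0 rA by simp
      ultimately show False by simp
    qed
    then show "ennreal (\<Sum>j=i..n. a j) \<le> F i t0" using mle[OF t0] sp by simp
  qed
qed

lemma lower_lfp:
  fixes lam :: "real \<Rightarrow> real"
  assumes cont: "continuous_on {0..} lam" and nn: "\<And>s. 0 \<le> s \<Longrightarrow> 0 \<le> lam s"
    and le: "\<And>s. 0 \<le> s \<Longrightarrow> lam s \<le> L"
    and apos: "\<And>j. 1 \<le> j \<Longrightarrow> j \<le> n \<Longrightarrow> 0 < a j"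
    and i: "1 \<le> i" "i \<le> n" and t: "0 \<le> t"
  shows "ennreal (\<Sum>j=i..n. a j) \<le> exp_completion lam a n i t"
proof -
  define G where "G = (\<lambda>i (t::real). if 1 \<le> i \<and> i \<le> Suc n \<and> 0 \<le> t then ennreal (\<Sum>j=i..n. a j) else 0)"
  have "G \<le> lfp (restart_op lam a n)"
  proof (rule lfp_greatest)
    fix F assume pre: "restart_op lam a n F \<le> F"
    show "G \<le> F"
    proof (intro le_funI)
      fix i t
      show "G i t \<le> F i t"
        using lower_pre[OF cont nn le apos pre, of "Suc n - i"] unfolding G_def by auto
    qed
  qed
  then have "G i t \<le> exp_completion lam a n i t" unfolding exp_completion_def by (auto dest!: le_funD)
  then show ?thesis using i t unfolding G_def by simp
qed


theorem lemma4:
  fixes a :: "nat \<Rightarrow> real" and n :: nat and lbar :: real and f :: "real \<Rightarrow> real"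
  assumes a_pos: "0 < a 1"
    and a_incr: "\<And>j. 1 \<le> j \<Longrightarrow> j < n \<Longrightarrow> a j < a (Suc j)"
    and lbar_pos: "0 < lbar"
    and f_pos: "\<And>t. 0 \<le> t \<Longrightarrow> 0 < f t"
    and f_diff: "\<And>t. 0 \<le> t \<Longrightarrow> f differentiable (at t within {0..})"
    and f_inf: "(INF t\<in>{0..}. f t) > 0"
    and f_bdd: "bdd_above (f ` {0..})"
    and lbar_small: "lbar \<le> 1 / (2 * (SUP t\<in>{0..}. f t) * a n)"
    and t_nonneg: "0 \<le> t"
    and i_range: "1 \<le> i" "i \<le> n"
  shows "ennreal (\<Sum>j=i..n. a j) \<le> exp_completion (\<lambda>s. lbar * f s) a n i t
       \<and> exp_completion (\<lambda>s. lbar * f s) a n i t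
           \<le> ennreal ((\<Sum>j=i..n. a j) + lbar * (SUP t\<in>{0..}. f t) * (\<Sum>j=i..n. (a j)\<^sup>2))
       \<and> exp_completion (\<lambda>s. lbar * f s) a n i t \<le> ennreal (3/2 * (\<Sum>j=i..n. a j))"
proof -
  define fs where "fs = (SUP t\<in>{0..}. f t)"
  define L where "L = lbar * fs"
  have fle: "\<And>s. 0 \<le> s \<Longrightarrow> f s \<le> fs" unfolding fs_def by (rule cSUP_upper[OF _ f_bdd]) simp
  have fs0: "0 < fs" using fle[of 0] f_pos[of 0] by simp
  have L0: "0 \<le> L" unfolding L_def using fs0 lbar_pos by simp
  have fc: "continuous_on {0..} f"
    unfolding continuous_on_eq_continuous_within
    using f_diff differentiable_imp_continuous_within by auto
  have cont: "continuous_on {0..} (\<lambda>s. lbar * f s)" by (intro continuous_intros fc)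
  have nn: "\<And>s. 0 \<le> s \<Longrightarrow> 0 \<le> lbar * f s" using f_pos lbar_pos by (simp add: less_imp_le)
  have le: "\<And>s. 0 \<le> s \<Longrightarrow> lbar * f s \<le> L" unfolding L_def using fle lbar_pos by simp
  have amono: "a j \<le> a k" if "1 \<le> j" "j \<le> k" "k \<le> n" for j k
    using that(2,3)
  proof (induction k rule: dec_induct)
    case base then show ?case by simp
  next
    case (step m)
    then show ?case using a_incr[of m] that(1) by fastforce
  qed
  have apos: "\<And>j. 1 \<le> j \<Longrightarrow> j \<le> n \<Longrightarrow> 0 < a j"
    using amono[of 1] a_pos by fastforce
  have an: "0 < a n" using apos i_range by simp
  have Ln: "L * a n \<le> 1/2"
  proof -
    have "lbar * (2 * fs * a n) \<le> 1" using lbar_small fs0 an unfolding fs_def[symmetric]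
      by (simp add: pos_le_divide_eq)
    then show ?thesis unfolding L_def by (simp add: algebra_simps)
  qed
  have small: "\<And>j. 1 \<le> j \<Longrightarrow> j \<le> n \<Longrightarrow> L * a j \<le> 1/2"
    using amono L0 Ln by (meson dual_order.trans mult_left_mono order_refl)
  have low: "ennreal (\<Sum>j=i..n. a j) \<le> exp_completion (\<lambda>s. lbar * f s) a n i t"
    by (rule lower_lfp[OF cont nn le apos i_range t_nonneg])
  have up0: "exp_completion (\<lambda>s. lbar * f s) a n i t \<le> ennreal (\<Sum>j=i..n. a j + L * (a j)\<^sup>2)"
    by (rule upper_lfp[OF cont nn le L0 apos small i_range(1) t_nonneg])
  have eqs: "(\<Sum>j=i..n. a j + L * (a j)\<^sup>2) = (\<Sum>j=i..n. a j) + lbar * fs * (\<Sum>j=i..n. (a j)\<^sup>2)"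
    unfolding L_def by (simp add: sum.distrib sum_distrib_left)
  have "(\<Sum>j=i..n. a j + L * (a j)\<^sup>2) \<le> (\<Sum>j=i..n. 3/2 * a j)"
  proof (rule sum_mono)
    fix j assume j: "j \<in> {i..n}"
    then have "L * a j \<le> 1/2" "0 < a j" using small apos i_range by auto
    then have "L * a j * a j \<le> 1/2 * a j" by (intro mult_right_mono) auto
    then show "a j + L * (a j)\<^sup>2 \<le> 3/2 * a j" by (simp add: power2_eq_square algebra_simps)
  qed
  then have up2: "(\<Sum>j=i..n. a j + L * (a j)\<^sup>2) \<le> 3/2 * (\<Sum>j=i..n. a j)" by (simp add: sum_distrib_left)
  have up1: "exp_completion (\<lambda>s. lbar * f s) a n i t
           \<le> ennreal ((\<Sum>j=i..n. a j) + lbar * fs * (\<Sum>j=i..n. (a j)\<^sup>2))"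
    using up0 eqs by simp
  have up3: "exp_completion (\<lambda>s. lbar * f s) a n i t \<le> ennreal (3/2 * (\<Sum>j=i..n. a j))"
    using up0 ennreal_leI[OF up2] by (rule order_trans)
  show ?thesis using low up1 up3 unfolding fs_def by blast
qed

end
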